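(* Let $q_1\le q_2\le\dots\le q_L$ be positive reals, and suppose there exist distinct positive reals $p_1,\dots,p_K$ such that: (C1) for each $1\le\ell\le L$, $q_\ell=\sum_{k\in T_\ell}p_k$ for some $T_\ell\subseteq\{1,\dots,K\}$; (C2) for each $1\le k\le K$ there exists $\ell$ with $q_\ell=p_k$; (C3) $\sum_{k\in T}p_k\neq\sum_{k\in T'}p_k$ for all distinct $T,T'\subseteq\{1,\dots,K\}$. Then the sparsest-fit algorithm run on $q_1,\dots,q_L$ outputs $k(L)=K$ and, up to relabeling of the indices $1,\dots,K$, the values $p_1,\dots,p_K$ and the sets $A_k=\{\ell: k\in T_\ell\}$, $1\le k\le K$.
   Context: Sparsest-fit algorithm on input $q_1\le\dots\le q_L$: initialize $p_0=0$, $k(0)=0$, and $A_k=\emptyset$ for all $k$. For $\ell=1,\dots,L$: if $q_\ell=\sum_{k\in T}p_k$ for some $T\subseteq\{0,1,\dots,k(\ell-1)\}$ (using the values $p_k$ found so far), set $k(\ell)=k(\ell-1)$ and $A_k\leftarrow A_k\cup\{\ell\}$ for all $k\in T$; otherwise set $k(\ell)=k(\ell-1)+1$, $p_{k(\ell)}=q_\ell$ and $A_{k(\ell)}\leftarrow A_{k(\ell)}\cup\{\ell\}$. Finally output $k(L)$ and $(p_k,A_k)$ for $1\le k\le k(L)$. The algorithm has no knowledge of $K$ or of the sets $T_\ell$. *)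

theory Defs
  imports Main "HOL.Real"
begin

text \<open>Sparsest-fit algorithm, modelled as a (nondeterministic) execution relation.
  The state after processing q_1..q_l is (k(l), p, A) with p :: nat => real
  (p 0 = 0; p j for 1 <= j <= k(l) are the values found) and A :: nat => nat set.
  The choice of the subset T in the "fit" case is left arbitrary (any admissible T).\<close>

inductive sf_exec ::
  "(nat \<Rightarrow> real) \<Rightarrow> nat \<Rightarrow> nat \<times> (nat \<Rightarrow> real) \<times> (nat \<Rightarrow> nat set) \<Rightarrow> bool"
  for q :: "nat \<Rightarrow> real" where
  init: "sf_exec q 0 (0, \<lambda>_. 0, \<lambda>_. {})"
| fit: "\<lbrakk> sf_exec q l (k, p, A); T \<subseteq> {0..k}; q (Suc l) = sum p T \<rbrakk>
        \<Longrightarrow> sf_exec q (Suc l)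
              (k, p, \<lambda>j. if j \<in> T then insert (Suc l) (A j) else A j)"
| new: "\<lbrakk> sf_exec q l (k, p, A); \<not> (\<exists>T. T \<subseteq> {0..k} \<and> q (Suc l) = sum p T) \<rbrakk>
        \<Longrightarrow> sf_exec q (Suc l)
              (Suc k, p(Suc k := q (Suc l)), A(Suc k := insert (Suc l) (A (Suc k))))"

end

theory Submission
  imports Defs
begin

definition INV :: "nat \<Rightarrow> nat \<Rightarrow> (nat \<Rightarrow> nat set) \<Rightarrow> (nat \<Rightarrow> real) \<Rightarrow> nat \<Rightarrow> nat \<Rightarrow> (nat \<Rightarrow> real) \<Rightarrow> (nat \<Rightarrow> nat set) \<Rightarrow> (nat \<Rightarrow> real) \<Rightarrow> (nat \<Rightarrow> nat) \<Rightarrow> bool"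
  where "INV K L T q l k p' A p \<sigma> \<longleftrightarrow>
    inj_on \<sigma> {1..k} \<and> \<sigma> ` {1..k} \<subseteq> {1..K} \<and> p' 0 = 0 \<and>
    (\<forall>i\<in>{1..k}. p' i = p (\<sigma> i) \<and> A i = {l'\<in>{1..l}. \<sigma> i \<in> T l'}) \<and>
    (\<forall>i>k. A i = {}) \<and>
    (\<forall>l'\<in>{1..l}. T l' \<subseteq> \<sigma> ` {1..k}) \<and>
    (\<forall>j\<in>{1..K}. (\<exists>l'\<in>{1..l}. q l' = p j) \<longrightarrow> j \<in> \<sigma> ` {1..k})"

lemma INV_p: "INV K L T q l k p' A p \<sigma> \<Longrightarrow> \<forall>i\<in>{1..k}. p' i = p (\<sigma> i)"
  unfolding INV_def by blast
lemma INV_A: "INV K L T q l k p' A p \<sigma> \<Longrightarrow> i \<in> {1..k} \<Longrightarrow> A i = {l'\<in>{1..l}. \<sigma> i \<in> T l'}"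
  unfolding INV_def by blast
lemma INV_inj: "INV K L T q l k p' A p \<sigma> \<Longrightarrow> inj_on \<sigma> {1..k}"
  unfolding INV_def by blast
lemma INV_img: "INV K L T q l k p' A p \<sigma> \<Longrightarrow> \<sigma> ` {1..k} \<subseteq> {1..K}"
  unfolding INV_def by blast
lemma INV_p0: "INV K L T q l k p' A p \<sigma> \<Longrightarrow> p' 0 = 0"
  unfolding INV_def by blast
lemma INV_Abig: "INV K L T q l k p' A p \<sigma> \<Longrightarrow> \<forall>i>k. A i = {}"
  unfolding INV_def by blast
lemma INV_fnd: "INV K L T q l k p' A p \<sigma> \<Longrightarrow> \<forall>j\<in>{1..K}. (\<exists>l'\<in>{1..l}. q l' = p j) \<longrightarrow> j \<in> \<sigma> ` {1..k}"
  unfolding INV_def by blast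

lemma sum_transfer:
  fixes \<sigma> :: "nat \<Rightarrow> nat" and p p' :: "nat \<Rightarrow> real" and k :: nat
  assumes "inj_on \<sigma> {1..k}" "p' 0 = 0" "\<forall>i\<in>{1..k}. p' i = p (\<sigma> i)" "U \<subseteq> {0..k}"
  shows "sum p' U = sum p (\<sigma> ` (U - {0}))"
proof -
  have fin: "finite U" using finite_subset[OF assms(4)] by simp
  have "sum p' U = sum p' (U - {0})"
  proof (cases "0 \<in> U")
    case True
    then show ?thesis using sum.remove[OF fin True, of p'] assms(2) by simp
  qed simp
  also have "\<dots> = sum (p \<circ> \<sigma>) (U - {0})"
  proof (rule sum.cong)
    fix x assume "x \<in> U - {0}"
    hence "x \<in> {1..k}" using assms(4) by auto
    thus "p' x = (p \<circ> \<sigma>) x" using assms(3) by simp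
  qed simp
  also have "\<dots> = sum p (\<sigma> ` (U - {0}))"
  proof -
    have "U - {0} \<subseteq> {1..k}" using assms(4) by auto
    hence "inj_on \<sigma> (U - {0})" using assms(1) by (rule inj_on_subset[rotated])
    thus ?thesis by (simp add: sum.reindex)
  qed
  finally show ?thesis .
qed

lemma inv_step:
  fixes L K :: nat and q p :: "nat \<Rightarrow> real" and T :: "nat \<Rightarrow> nat set"
  assumes q_sorted: "\<forall>l\<in>{1..L}. \<forall>l'\<in>{1..L}. l \<le> l' \<longrightarrow> q l \<le> q l'"
    and p_pos: "\<forall>k\<in>{1..K}. p k > 0"
    and p_distinct: "inj_on p {1..K}"
    and C1: "\<forall>l\<in>{1..L}. T l \<subseteq> {1..K} \<and> q l = (\<Sum>k\<in>T l. p k)"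
    and C2: "\<forall>k\<in>{1..K}. \<exists>l\<in>{1..L}. q l = p k"
    and C3: "\<forall>S S'. S \<subseteq> {1..K} \<longrightarrow> S' \<subseteq> {1..K} \<longrightarrow> S \<noteq> S'
               \<longrightarrow> (\<Sum>k\<in>S. p k) \<noteq> (\<Sum>k\<in>S'. p k)"
  shows "sf_exec q l (k, p', A) \<Longrightarrow> l \<le> L \<Longrightarrow> \<exists>\<sigma>. INV K L T q l k p' A p \<sigma>"
proof (induction l "(k, p', A)" arbitrary: k p' A rule: sf_exec.induct)
  case init
  then show ?case by (auto simp: INV_def)
next
  case (fit l k p' A U)
  then obtain \<sigma> where I: "INV K L T q l k p' A p \<sigma>" by auto
  have l1: "Suc l \<in> {1..L}" using fit by auto
  have hT: "T (Suc l) \<subseteq> {1..K}" "q (Suc l) = sum p (T (Suc l))" using C1 l1 by auto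
  have "sum p' U = sum p (\<sigma> ` (U - {0}))"
    by (rule sum_transfer[OF INV_inj[OF I] INV_p0[OF I] INV_p[OF I] fit(3)])
  hence seq: "sum p (\<sigma> ` (U - {0})) = sum p (T (Suc l))" using fit(4) hT(2) by simp
  have S1: "\<sigma> ` (U - {0}) \<subseteq> {1..K}"
  proof -
    have "U - {0} \<subseteq> {1..k}" using fit(3) by auto
    thus ?thesis using INV_img[OF I] by blast
  qed
  have eqT: "\<sigma> ` (U - {0}) = T (Suc l)"
  proof (rule ccontr)
    assume "\<sigma> ` (U - {0}) \<noteq> T (Suc l)"
    hence "sum p (\<sigma> ` (U - {0})) \<noteq> sum p (T (Suc l))" by (rule C3[rule_format, OF S1 hT(1)])
    thus False using seq by simp
  qed
  have Tsub: "T (Suc l) \<subseteq> \<sigma> ` {1..k}"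
  proof -
    have "U - {0} \<subseteq> {1..k}" using fit(3) by auto
    thus ?thesis using eqT by blast
  qed
  show ?case
  proof (intro exI[of _ \<sigma>])
    show "INV K L T q (Suc l) k p' (\<lambda>j. if j \<in> U then insert (Suc l) (A j) else A j) p \<sigma>"
      unfolding INV_def
    proof (intro conjI)
      show "inj_on \<sigma> {1..k}" "\<sigma> ` {1..k} \<subseteq> {1..K}" "p' 0 = 0"
        using INV_inj[OF I] INV_img[OF I] INV_p0[OF I] by auto
      show "\<forall>i\<in>{1..k}. p' i = p (\<sigma> i) \<and>
        (if i \<in> U then insert (Suc l) (A i) else A i) = {l' \<in> {1..Suc l}. \<sigma> i \<in> T l'}"
      proof
        fix i assume i: "i \<in> {1..k}"
        have iff: "i \<in> U \<longleftrightarrow> \<sigma> i \<in> T (Suc l)"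
        proof
          assume "i \<in> U" thus "\<sigma> i \<in> T (Suc l)" using eqT i by auto
        next
          assume "\<sigma> i \<in> T (Suc l)"
          hence "\<sigma> i \<in> \<sigma> ` (U - {0})" by (simp only: eqT)
          then obtain i' where i'U: "i' \<in> U - {0}" and si: "\<sigma> i = \<sigma> i'" by (rule imageE)
          have "i' \<in> {1..k}" using fit(3) i'U by auto
          from inj_onD[OF INV_inj[OF I] si i this] have "i = i'" .
          hence "i' = i" by simp
          thus "i \<in> U" using i'U by simp
        qed
        have Ai: "A i = {l' \<in> {1..l}. \<sigma> i \<in> T l'}" "p' i = p (\<sigma> i)"
          using INV_A[OF I i] INV_p[OF I] i by auto
        show "p' i = p (\<sigma> i) \<and>
          (if i \<in> U then insert (Suc l) (A i) else A i) = {l' \<in> {1..Suc l}. \<sigma> i \<in> T l'}"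
          using Ai iff by (auto simp: le_Suc_eq)
      qed
      show "\<forall>i>k. (if i \<in> U then insert (Suc l) (A i) else A i) = {}"
        using INV_Abig[OF I] fit(3) by auto
      show "\<forall>l'\<in>{1..Suc l}. T l' \<subseteq> \<sigma> ` {1..k}"
      proof
        fix l' assume l': "l' \<in> {1..Suc l}"
        have old: "\<forall>l'\<in>{1..l}. T l' \<subseteq> \<sigma> ` {1..k}" using I by (simp add: INV_def)
        have new: "T (Suc l) \<subseteq> \<sigma> ` {1..k}"
        proof -
          have "U - {0} \<subseteq> {1..k}" using fit(3) by auto
          thus ?thesis using eqT by blast
        qed
        show "T l' \<subseteq> \<sigma> ` {1..k}"
        proof (cases "l' = Suc l")
          case True thus ?thesis using new by simp
        next
          case False thus ?thesis using old l' by auto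
        qed
      qed
      show "\<forall>j\<in>{1..K}. (\<exists>l'\<in>{1..Suc l}. q l' = p j) \<longrightarrow> j \<in> \<sigma> ` {1..k}"
      proof (intro ballI impI)
        fix j assume j: "j \<in> {1..K}" and "\<exists>l'\<in>{1..Suc l}. q l' = p j"
        then obtain l' where l': "l' \<in> {1..Suc l}" "q l' = p j" by auto
        show "j \<in> \<sigma> ` {1..k}"
        proof (cases "l' = Suc l")
          case True
          have "sum p {j} = sum p (T (Suc l))" using hT l' True by simp
          have "T (Suc l) = {j}"
          proof (rule ccontr)
            assume "T (Suc l) \<noteq> {j}"
            hence "{j} \<noteq> T (Suc l)" by simp
            moreover have "{j} \<subseteq> {1..K}" using j by simp
            ultimately have "sum p {j} \<noteq> sum p (T (Suc l))" using C3[rule_format, OF _ hT(1)] by blast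
            thus False using \<open>sum p {j} = sum p (T (Suc l))\<close> by simp
          qed
          thus ?thesis using Tsub by auto
        next
          case False
          hence "l' \<in> {1..l}" using l' by auto
          moreover have "\<forall>j\<in>{1..K}. (\<exists>l'\<in>{1..l}. q l' = p j) \<longrightarrow> j \<in> \<sigma> ` {1..k}"
            using I by (simp add: INV_def)
          ultimately show ?thesis using l' j by blast
        qed
      qed
    qed
  qed
next
  case (new l k p' A)
  have l1: "Suc l \<in> {1..L}" using new.prems by simp
  have nofit: "\<not> (\<exists>T. T \<subseteq> {0..k} \<and> q (Suc l) = sum p' T)" by fact
  have "\<exists>\<sigma>. INV K L T q l k p' A p \<sigma>" using new.hyps(2) new.prems by simp
  then obtain \<sigma> where I: "INV K L T q l k p' A p \<sigma>" by blast
  have hT: "T (Suc l) \<subseteq> {1..K}" "q (Suc l) = sum p (T (Suc l))" using C1 l1 by auto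
  have notsub: "\<not> T (Suc l) \<subseteq> \<sigma> ` {1..k}"
  proof
    assume sub: "T (Suc l) \<subseteq> \<sigma> ` {1..k}"
    define U where "U = {i\<in>{1..k}. \<sigma> i \<in> T (Suc l)}"
    have "U \<subseteq> {0..k}" unfolding U_def by auto
    moreover have "sum p' U = sum p (\<sigma> ` (U - {0}))"
      by (rule sum_transfer[OF INV_inj[OF I] INV_p0[OF I] INV_p[OF I] \<open>U \<subseteq> {0..k}\<close>])
    moreover have "\<sigma> ` (U - {0}) = T (Suc l)" using sub unfolding U_def by force
    ultimately have "U \<subseteq> {0..k} \<and> q (Suc l) = sum p' U" using hT by simp
    thus False using nofit by blast
  qed
  then obtain j where j: "j \<in> T (Suc l)" "j \<notin> \<sigma> ` {1..k}" by auto
  have jK: "j \<in> {1..K}" using j hT by auto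
  obtain l'' where l'': "l'' \<in> {1..L}" "q l'' = p j" using C2 jK by blast
  have "\<not> l'' \<le> l"
  proof
    assume "l'' \<le> l"
    hence "l'' \<in> {1..l}" using l'' by auto
    moreover have "\<forall>j\<in>{1..K}. (\<exists>l'\<in>{1..l}. q l' = p j) \<longrightarrow> j \<in> \<sigma> ` {1..k}"
      using I by (simp add: INV_def)
    ultimately show False using l'' jK j by blast
  qed
  hence "Suc l \<le> l''" by simp
  hence "q (Suc l) \<le> q l''" using q_sorted l''(1) l1 by blast
  moreover have "p j \<le> q (Suc l)"
  proof -
    have fT: "finite (T (Suc l))" using finite_subset[OF hT(1)] by simp
    have "\<forall>b\<in>T (Suc l) - {j}. 0 \<le> p b" using hT(1) p_pos by (auto intro: less_imp_le)
    hence "sum p {j} \<le> sum p (T (Suc l))"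
      using sum_mono2[OF fT, of "{j}" p] j(1) by simp
    thus ?thesis using hT by simp
  qed
  ultimately have qj: "q (Suc l) = p j" using l'' by auto
  have Tj: "T (Suc l) = {j}"
  proof -
    have "sum p {j} = sum p (T (Suc l))" using hT qj by simp
    show ?thesis
    proof (rule ccontr)
      assume "T (Suc l) \<noteq> {j}"
      hence "{j} \<noteq> T (Suc l)" by simp
      moreover have "{j} \<subseteq> {1..K}" using jK by simp
      ultimately have "sum p {j} \<noteq> sum p (T (Suc l))" using C3[rule_format, OF _ hT(1)] by blast
      thus False using \<open>sum p {j} = sum p (T (Suc l))\<close> by simp
    qed
  qed
  define \<sigma>' where "\<sigma>' = \<sigma>(Suc k := j)"
  have img: "\<sigma>' ` {1..Suc k} = insert j (\<sigma> ` {1..k})"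
  proof -
    have "{1..Suc k} = insert (Suc k) {1..k}" by auto
    moreover have "\<sigma>' ` {1..k} = \<sigma> ` {1..k}" unfolding \<sigma>'_def by (intro image_cong) auto
    ultimately show ?thesis unfolding \<sigma>'_def by auto
  qed
  show ?case
  proof (intro exI[of _ \<sigma>'])
    show "INV K L T q (Suc l) (Suc k) (p'(Suc k := q (Suc l))) (A(Suc k := insert (Suc l) (A (Suc k)))) p \<sigma>'"
      unfolding INV_def
    proof (intro conjI)
      have ij: "inj_on \<sigma>' {1..k}" unfolding \<sigma>'_def using INV_inj[OF I] j(2) by (rule inj_on_fun_updI)
      have e1: "\<sigma>' ` {1..k} = \<sigma> ` {1..k}" unfolding \<sigma>'_def by (intro image_cong) auto
      have e2: "{1..Suc k} = insert (Suc k) {1..k}" by auto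
      have e3: "{1..k} - {Suc k} = {1..k}" by auto
      have "\<sigma>' (Suc k) = j" unfolding \<sigma>'_def by simp
      hence "inj_on \<sigma>' (insert (Suc k) {1..k})" unfolding inj_on_insert e3 e1 using ij j(2) by simp
      thus "inj_on \<sigma>' {1..Suc k}" unfolding e2 .
      have "\<sigma> ` {1..k} \<subseteq> {1..K}" using I by (simp add: INV_def)
      thus "\<sigma>' ` {1..Suc k} \<subseteq> {1..K}" using img jK by simp
      show "(p'(Suc k := q (Suc l))) 0 = 0" using I by (simp add: INV_def)
      show "\<forall>i\<in>{1..Suc k}. (p'(Suc k := q (Suc l))) i = p (\<sigma>' i) \<and>
           (A(Suc k := insert (Suc l) (A (Suc k)))) i = {l' \<in> {1..Suc l}. \<sigma>' i \<in> T l'}"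
      proof
        fix i assume i: "i \<in> {1..Suc k}"
        show "(p'(Suc k := q (Suc l))) i = p (\<sigma>' i) \<and>
           (A(Suc k := insert (Suc l) (A (Suc k)))) i = {l' \<in> {1..Suc l}. \<sigma>' i \<in> T l'}"
        proof (cases "i = Suc k")
          case True
          have A0: "A (Suc k) = {}" using I by (simp add: INV_def)
          have old: "\<forall>l'\<in>{1..l}. T l' \<subseteq> \<sigma> ` {1..k}" using I by (simp add: INV_def)
          hence "\<forall>l'\<in>{1..l}. j \<notin> T l'" using j(2) by blast
          hence "{l' \<in> {1..Suc l}. j \<in> T l'} = {Suc l}" using j by (auto simp: le_Suc_eq)
          moreover have "\<sigma>' i = j" unfolding \<sigma>'_def True by simp
          ultimately show ?thesis using True A0 qj by simp
        next
          case False
          hence i': "i \<in> {1..k}" using i by auto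
          have "\<sigma> i \<noteq> j" using j i' by auto
          have Ai: "p' i = p (\<sigma> i)" "A i = {l'\<in>{1..l}. \<sigma> i \<in> T l'}" using I i' by (simp_all add: INV_def)
          have "{l'\<in>{1..Suc l}. \<sigma> i \<in> T l'} = {l'\<in>{1..l}. \<sigma> i \<in> T l'}"
            using \<open>\<sigma> i \<noteq> j\<close> Tj by (auto simp: le_Suc_eq)
          moreover have "\<sigma>' i = \<sigma> i" using False unfolding \<sigma>'_def by simp
          ultimately show ?thesis using False Ai by simp
        qed
      qed
      show "\<forall>i>Suc k. (A(Suc k := insert (Suc l) (A (Suc k)))) i = {}" using I by (simp add: INV_def)
      show "\<forall>l'\<in>{1..Suc l}. T l' \<subseteq> \<sigma>' ` {1..Suc k}"
      proof
        fix l' assume l': "l' \<in> {1..Suc l}"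
        have old: "\<forall>l'\<in>{1..l}. T l' \<subseteq> \<sigma> ` {1..k}" using I by (simp add: INV_def)
        show "T l' \<subseteq> \<sigma>' ` {1..Suc k}"
        proof (cases "l' = Suc l")
          case True thus ?thesis unfolding img using Tj by simp
        next
          case False
          hence "l' \<in> {1..l}" using l' by auto
          hence "T l' \<subseteq> \<sigma> ` {1..k}" using old by blast
          thus ?thesis unfolding img by blast
        qed
      qed
      show "\<forall>j'\<in>{1..K}. (\<exists>l'\<in>{1..Suc l}. q l' = p j') \<longrightarrow> j' \<in> \<sigma>' ` {1..Suc k}"
      proof (intro ballI impI)
        fix j' assume j': "j' \<in> {1..K}" and "\<exists>l'\<in>{1..Suc l}. q l' = p j'"
        then obtain l' where l': "l' \<in> {1..Suc l}" "q l' = p j'" by blast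
        show "j' \<in> \<sigma>' ` {1..Suc k}"
        proof (cases "l' = Suc l")
          case True
          hence "p j' = p j" using l'(2) qj by simp
          hence "j' = j" by (rule inj_onD[OF p_distinct _ j' jK])
          thus ?thesis unfolding img by simp
        next
          case False
          hence "l' \<in> {1..l}" using l' by auto
          moreover have "\<forall>j\<in>{1..K}. (\<exists>l'\<in>{1..l}. q l' = p j) \<longrightarrow> j \<in> \<sigma> ` {1..k}"
            using I by (simp add: INV_def)
          ultimately have "j' \<in> \<sigma> ` {1..k}" using l' j' by blast
          thus ?thesis unfolding img by simp
        qed
      qed
    qed
  qed
qed

lemma exec_exists: "\<exists>st. sf_exec q l st"
proof (induction l)
  case 0
  then show ?case using sf_exec.init by blast
next
  case (Suc l)
  then obtain k p A where "sf_exec q l (k, p, A)" by (metis prod_cases3)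
  show ?case
  proof (cases "\<exists>T. T \<subseteq> {0..k} \<and> q (Suc l) = sum p T")
    case True
    then obtain U where "U \<subseteq> {0..k}" "q (Suc l) = sum p U" by blast
    with \<open>sf_exec q l (k, p, A)\<close> show ?thesis by (blast intro: sf_exec.fit)
  next
    case False
    with \<open>sf_exec q l (k, p, A)\<close> show ?thesis by (blast intro: sf_exec.new)
  qed
qed

theorem lemma2:
  fixes L K :: nat and q p :: "nat \<Rightarrow> real" and T :: "nat \<Rightarrow> nat set"
  assumes q_sorted: "\<forall>l\<in>{1..L}. \<forall>l'\<in>{1..L}. l \<le> l' \<longrightarrow> q l \<le> q l'"
    and q_pos: "\<forall>l\<in>{1..L}. q l > 0"
    and p_pos: "\<forall>k\<in>{1..K}. p k > 0"
    and p_distinct: "inj_on p {1..K}"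
    and C1: "\<forall>l\<in>{1..L}. T l \<subseteq> {1..K} \<and> q l = (\<Sum>k\<in>T l. p k)"
    and C2: "\<forall>k\<in>{1..K}. \<exists>l\<in>{1..L}. q l = p k"
    and C3: "\<forall>S S'. S \<subseteq> {1..K} \<longrightarrow> S' \<subseteq> {1..K} \<longrightarrow> S \<noteq> S'
               \<longrightarrow> (\<Sum>k\<in>S. p k) \<noteq> (\<Sum>k\<in>S'. p k)"
  shows "(\<exists>st. sf_exec q L st) \<and>
         (\<forall>k' p' A'. sf_exec q L (k', p', A') \<longrightarrow>
            k' = K \<and>
            (\<exists>\<sigma>. bij_betw \<sigma> {1..K} {1..K} \<and>
                 (\<forall>k\<in>{1..K}. p' k = p (\<sigma> k) \<and> A' k = {l\<in>{1..L}. \<sigma> k \<in> T l})))"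
proof (intro conjI allI impI)
  show "\<exists>st. sf_exec q L st" by (rule exec_exists)
  fix k' p' A' assume ex: "sf_exec q L (k', p', A')"
  obtain \<sigma> where I: "INV K L T q L k' p' A' p \<sigma>"
    using inv_step[OF q_sorted p_pos p_distinct C1 C2 C3 ex] by auto
  have "{1..K} \<subseteq> \<sigma> ` {1..k'}" using INV_fnd[OF I] C2 by blast
  hence eq: "\<sigma> ` {1..k'} = {1..K}" using INV_img[OF I] by blast
  have inj: "inj_on \<sigma> {1..k'}" using INV_inj[OF I] .
  have "card {1..k'} = card {1..K}" using card_image[OF inj] eq by simp
  thus kK: "k' = K" by simp
  show "\<exists>\<sigma>. bij_betw \<sigma> {1..K} {1..K} \<and>
                 (\<forall>k\<in>{1..K}. p' k = p (\<sigma> k) \<and> A' k = {l\<in>{1..L}. \<sigma> k \<in> T l})"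
    using INV_p[OF I] INV_A[OF I] eq inj kK unfolding bij_betw_def by auto
qed

end
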